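(* Let $X\in RV_+^p(\alpha)$ with $n\Pr(b_n^{-1}X\in\cdot)\stackrel{v}{\to}\nu_X(\cdot)$, and suppose $n\Pr\{X_i\le\exp(-kb_n)\}\to0$ for every $k>0$ and $i=1,\ldots,p$. Then $t^{-1}(X)\in RV^p(\alpha)$ and $$n\Pr\{b_n^{-1}t^{-1}(X)\in\cdot\}\stackrel{v}{\to}\nu_{t^{-1}(X)}(\cdot)=\nu_X(\cdot\cap[0,\infty]^p),$$ vague convergence in the nonnegative Radon measures on $[-\infty,\infty]^p\setminus\{0\}$.
   Context: $t(y)=\log\{1+\exp(y)\}$, $t^{-1}(x)=\log\{\exp(x)-1\}$, applied componentwise, extended by $t(-\infty)=0$, $t^{-1}(0)=-\infty$, $t(\infty)=t^{-1}(\infty)=\infty$. $X\in RV_+^p(\alpha)$: $X$ takes values in $[0,\infty)^p$ and $n\Pr(b_n^{-1}X\in\cdot)\stackrel{v}{\to}\nu_X$ vaguely on $[0,\infty]^p\setminus\{0\}$ for some $b_n\to\infty$ and nonzero $\nu_X$ (tail index $\alpha>0$). $Y\in RV^p(\alpha)$: $Y$ takes values in $\mathbb{R}^p$ and $n\Pr(b_n^{-1}Y\in\cdot)\stackrel{v}{\to}\nu_Y$ vaguely on $[-\infty,\infty]^p\setminus\{0\}$ for some $b_n\to\infty$ and nonzero $\nu_Y$ with index $\alpha$. *)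

theory Defs
  imports "HOL-Analysis.Analysis" "HOL-Probability.Probability"
begin

text \<open>Extended-real vectors: the compactified space [-\<infinity>,\<infinity>]^p is ereal^'p.
  The cone [0,\<infinity>]^p:\<close>
definition Splus :: "(ereal ^ 'n) set" where
  "Splus = {x. \<forall>i. 0 \<le> x $ i}"

text \<open>t(y) = log(1+exp y) and its inverse t^{-1}(x) = log(exp x - 1), with the
  stated conventions t(-\<infinity>)=0, t^{-1}(0)=-\<infinity>, t(\<infinity>)=t^{-1}(\<infinity>)=\<infinity>.
  (t^{-1} is only meaningful on [0,\<infinity>]; its value at negative arguments is immaterial.)\<close>
fun t_fun :: "ereal \<Rightarrow> ereal" where
  "t_fun (ereal y) = ereal (ln (1 + exp y))"
| "t_fun PInfty = PInfty"
| "t_fun MInfty = 0"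

fun t_inv :: "ereal \<Rightarrow> ereal" where
  "t_inv (ereal x) = (if x \<le> 0 then MInfty else ereal (ln (exp x - 1)))"
| "t_inv PInfty = PInfty"
| "t_inv MInfty = MInfty"

definition scaled_law ::
  "'a measure \<Rightarrow> ('a \<Rightarrow> ereal ^ 'n) \<Rightarrow> (nat \<Rightarrow> real) \<Rightarrow> nat \<Rightarrow> (ereal ^ 'n) measure" where
  "scaled_law M Y b n =
     scale_measure (of_nat n) (distr M borel (\<lambda>\<omega>. \<chi> i. ereal (inverse (b n)) * Y \<omega> $ i))"

definition vague_conv ::
  "(ereal ^ 'n) set \<Rightarrow> (nat \<Rightarrow> (ereal ^ 'n) measure) \<Rightarrow> (ereal ^ 'n) measure \<Rightarrow> bool" where
  "vague_conv S \<mu> \<nu> \<longleftrightarrow>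
     (\<forall>f :: ereal ^ 'n \<Rightarrow> real.
        continuous_on S f \<and> (\<forall>x\<in>S. 0 \<le> f x) \<and>
        (\<exists>K. compact K \<and> K \<subseteq> S - {0} \<and> (\<forall>x\<in>S - K. f x = 0)) \<longrightarrow>
        ((\<lambda>n. \<integral>\<^sup>+x\<in>S - {0}. ennreal (f x) \<partial>\<mu> n) \<longlonglongrightarrow> (\<integral>\<^sup>+x\<in>S - {0}. ennreal (f x) \<partial>\<nu>)))"

definition radon_on :: "(ereal ^ 'n) set \<Rightarrow> (ereal ^ 'n) measure \<Rightarrow> bool" where
  "radon_on S \<nu> \<longleftrightarrow> sets \<nu> = sets borel \<and>
     (\<forall>K. compact K \<and> K \<subseteq> S - {0} \<longrightarrow> emeasure \<nu> K < \<infinity>)"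

definition homogeneous_on :: "(ereal ^ 'n) set \<Rightarrow> real \<Rightarrow> (ereal ^ 'n) measure \<Rightarrow> bool" where
  "homogeneous_on S \<alpha> \<nu> \<longleftrightarrow>
     (\<forall>c::real. c > 0 \<longrightarrow> (\<forall>A \<in> sets borel. A \<subseteq> S - {0} \<longrightarrow>
        emeasure \<nu> ((\<lambda>x. \<chi> i. ereal c * x $ i) ` A) = ennreal (c powr (-\<alpha>)) * emeasure \<nu> A))"

definition regvar_on ::
  "(ereal ^ 'n) set \<Rightarrow> 'a measure \<Rightarrow> ('a \<Rightarrow> ereal ^ 'n) \<Rightarrow> real \<Rightarrow> (nat \<Rightarrow> real)
     \<Rightarrow> (ereal ^ 'n) measure \<Rightarrow> bool" where
  "regvar_on S M Y \<alpha> b \<nu> \<longleftrightarrow>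
     \<alpha> > 0 \<and> Y \<in> borel_measurable M \<and> filterlim b at_top sequentially \<and>
     radon_on S \<nu> \<and> emeasure \<nu> (S - {0}) \<noteq> 0 \<and> homogeneous_on S \<alpha> \<nu> \<and>
     vague_conv S (scaled_law M Y b) \<nu>"

definition RV_plus ::
  "'a measure \<Rightarrow> ('a \<Rightarrow> real ^ 'n) \<Rightarrow> real \<Rightarrow> (nat \<Rightarrow> real) \<Rightarrow> (ereal ^ 'n) measure \<Rightarrow> bool" where
  "RV_plus M X \<alpha> b \<nu> \<longleftrightarrow>
     (\<forall>\<omega>\<in>space M. \<forall>i. 0 \<le> X \<omega> $ i) \<and>
     regvar_on Splus M (\<lambda>\<omega>. \<chi> i. ereal (X \<omega> $ i)) \<alpha> b \<nu>"

definition RV ::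
  "'a measure \<Rightarrow> ('a \<Rightarrow> ereal ^ 'n) \<Rightarrow> real \<Rightarrow> (nat \<Rightarrow> real) \<Rightarrow> (ereal ^ 'n) measure \<Rightarrow> bool" where
  "RV M Y \<alpha> b \<nu> \<longleftrightarrow>
     (AE \<omega> in M. \<forall>i. \<bar>Y \<omega> $ i\<bar> \<noteq> \<infinity>) \<and> regvar_on UNIV M Y \<alpha> b \<nu>"

end

theory Submission
  imports Defs
begin


definition qf :: "real \<Rightarrow> real" where "qf r = r / (1 + \<bar>r\<bar>)"
definition gf :: "real \<Rightarrow> ereal" where
  "gf t = (if 1 \<le> t then \<infinity> else if t \<le> -1 then -\<infinity> else ereal (t / (1 - \<bar>t\<bar>)))"

lemma qf_bound: "\<bar>qf r\<bar> < 1"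
  unfolding qf_def by (auto simp: abs_div field_simps)

lemma gf_qf: "gf (qf r) = ereal r"
proof -
  have "\<bar>qf r\<bar> < 1" by (rule qf_bound)
  moreover have "qf r / (1 - \<bar>qf r\<bar>) = r"
    unfolding qf_def by (cases "r \<ge> 0") (auto simp: field_simps abs_div)
  ultimately show ?thesis unfolding gf_def by auto
qed

lemma qf_lip_aux: "0 \<le> (s::real) \<Longrightarrow> s \<le> r \<Longrightarrow> r/(1+r) - s/(1+s) \<le> r - s"
proof -
  assume a: "0 \<le> s" "s \<le> r"
  have "r/(1+r) - s/(1+s) = (r - s) / ((1+r)*(1+s))" using a by (simp add: field_simps)
  also have "\<dots> \<le> (r - s) / 1"
  proof (rule divide_left_mono)
    have "0 \<le> r * s" using a by simp
    then show "1 \<le> (1 + r) * (1 + s)" using a by (simp add: algebra_simps)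
  qed (use a in auto)
  finally show ?thesis by simp
qed

lemma qf_lip_le: "s \<le> r \<Longrightarrow> qf r - qf s \<le> r - s"
proof -
  assume sr: "s \<le> r"
  show ?thesis
  proof (cases "0 \<le> s")
    case True then show ?thesis using qf_lip_aux[OF True sr] sr by (simp add: qf_def)
  next
    case s: False
    show ?thesis
    proof (cases "0 \<le> r")
      case True
      have 1: "r/(1+r) \<le> r" using True by (simp add: divide_le_eq algebra_simps)
      have "s * (1 - s) \<le> s" using s by (simp add: algebra_simps)
      then have "s \<le> s / (1 - s)" using s by (simp add: le_divide_eq)
      then have 2: "-s/(1-s) \<le> -s" by simp
      have "qf r - qf s = r/(1+r) + (-s)/(1-s)" using True s by (simp add: qf_def)
      then show ?thesis using 1 2 by linarith
    next
      case False
      have "qf r - qf s = (-s)/(1+(-s)) - (-r)/(1+(-r))" using False s by (simp add: qf_def)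
      also have "\<dots> \<le> (-s) - (-r)" using False s sr by (intro qf_lip_aux) auto
      finally show ?thesis by simp
    qed
  qed
qed

lemma qf_mono: "s \<le> r \<Longrightarrow> qf s \<le> qf r"
proof -
  assume sr: "s \<le> r"
  have "qf s \<le> 0" if "s < 0" using that by (simp add: qf_def divide_nonpos_pos)
  moreover have "0 \<le> qf r" if "0 \<le> r" using that by (simp add: qf_def)
  moreover have "qf s \<le> qf r" if "0 \<le> s" using qf_lip_aux[OF that sr] that sr
    by (simp add: qf_def divide_le_eq le_divide_eq algebra_simps)
  moreover have "qf s \<le> qf r" if "r < 0"
  proof -
    have "(-r)/(1+(-r)) \<le> (-s)/(1+(-s))" using that sr
      by (simp add: divide_le_eq le_divide_eq algebra_simps)
    then show ?thesis using that sr by (simp add: qf_def)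
  qed
  ultimately show ?thesis by linarith
qed

lemma qf_lip: "\<bar>qf r - qf s\<bar> \<le> \<bar>r - s\<bar>"
proof (cases "s \<le> r")
  case True then show ?thesis using qf_lip_le[OF True] qf_mono[OF True] by simp
next
  case False then have "r \<le> s" by simp
  then show ?thesis using qf_lip_le[of r s] qf_mono[of r s] by simp
qed

lemma gf_mono: "s \<le> t \<Longrightarrow> gf s \<le> gf t"
proof -
  assume st: "s \<le> t"
  have h: "s / (1 - \<bar>s\<bar>) \<le> t / (1 - \<bar>t\<bar>)" if "\<bar>s\<bar> < 1" "\<bar>t\<bar> < 1"
  proof -
    have "qf (s / (1 - \<bar>s\<bar>)) = s" "qf (t / (1 - \<bar>t\<bar>)) = t"
      using that by (cases "s \<ge> 0"; cases "t \<ge> 0"; auto simp: qf_def abs_div field_simps)+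
    then show ?thesis using st qf_mono by (metis linorder_not_le order_less_le)
  qed
  show ?thesis unfolding gf_def using st h by auto
qed

lemma gf_surj: "range gf = UNIV"
proof -
  have "x \<in> range gf" for x
  proof (cases x)
    case (real r) then show ?thesis using gf_qf[of r] by (metis rangeI)
  next
    case PInf then show ?thesis by (metis gf_def order_refl rangeI)
  next
    case MInf then have "x = gf (-1)" by (simp add: gf_def)
    then show ?thesis by simp
  qed
  then show ?thesis by auto
qed

lemma gf_cont: "continuous_on UNIV gf"
  by (rule continuous_onI_mono) (auto simp: gf_surj gf_mono)

definition ginv :: "ereal \<Rightarrow> real" where
  "ginv e = (if e = \<infinity> then 1 else if e = -\<infinity> then -1 else qf (real_of_ereal e))"

lemma gf_ginv: "gf (ginv e) = e"
  by (cases e) (simp_all add: ginv_def gf_qf, simp_all add: gf_def)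

lemma ginv_bound: "\<bar>ginv e\<bar> \<le> 1"
  using qf_bound by (cases e) (auto simp: less_imp_le ginv_def)

lemma cont_nth: "continuous_on UNIV (\<lambda>x::'a::topological_space^'b. x$i)"
  unfolding continuous_on_def by (intro ballI tendsto_vec_nth tendsto_ident_at)

lemma cont_vec_lambda:
  assumes "\<And>i. continuous_on UNIV (f i)"
  shows "continuous_on UNIV (\<lambda>x. \<chi> i. f i x)"
proof -
  show ?thesis unfolding continuous_on_def
    by (intro ballI tendsto_vec_lambda) (use assms in \<open>auto simp: continuous_on_def\<close>)
qed

definition Hm :: "real^'p \<Rightarrow> ereal^'p" where "Hm w = (\<chi> i. gf (w$i))"

lemma Hm_cont: "continuous_on UNIV Hm"
  unfolding Hm_def
  by (rule cont_vec_lambda, rule continuous_on_compose2[OF gf_cont cont_nth]) auto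

definition cube :: "(real^'p) set" where "cube = {w. \<forall>i. w$i \<in> {-1..1}}"

lemma compact_cube: "compact cube"
proof -
  have "closed cube" unfolding cube_def by (rule closed_vector_box) auto
  moreover have "bounded cube"
  proof -
    have "norm w \<le> real CARD('p)" if "w \<in> cube" for w :: "real^'p"
    proof -
      have "norm w \<le> (\<Sum>i\<in>UNIV. \<bar>w$i\<bar>)" by (rule norm_le_l1_cart)
      also have "\<dots> \<le> (\<Sum>i\<in>(UNIV::'p set). 1)" using that by (intro sum_mono) (auto simp: cube_def abs_le_iff)
      finally show ?thesis by simp
    qed
    then show ?thesis unfolding bounded_iff by blast
  qed
  ultimately show ?thesis by (simp add: compact_eq_bounded_closed)
qed

lemma Hm_cube: "Hm ` cube = UNIV"
proof -
  have "x \<in> Hm ` cube" for x :: "ereal^'p"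
  proof
    show "x = Hm (\<chi> i. ginv (x$i))" by (simp add: Hm_def gf_ginv vec_eq_iff)
    show "(\<chi> i. ginv (x$i)) \<in> cube" using ginv_bound by (auto simp: cube_def abs_le_iff)
  qed
  then show ?thesis by auto
qed

lemma compact_UNIV_vec: "compact (UNIV :: (ereal^'p) set)"
  by (metis Hm_cube compact_cube compact_continuous_image continuous_on_subset Hm_cont subset_UNIV)

lemma UC:
  fixes f :: "ereal^'p \<Rightarrow> real"
  assumes f: "continuous_on UNIV f" and e: "0 < \<epsilon>"
  shows "\<exists>\<delta>>0. \<forall>u v :: real^'p. (\<forall>i. \<bar>u$i - v$i\<bar> < \<delta>) \<longrightarrow>
            \<bar>f (\<chi> i. ereal (u$i)) - f (\<chi> i. ereal (v$i))\<bar> < \<epsilon>"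
proof -
  have "continuous_on cube (f \<circ> Hm)"
    by (rule continuous_on_compose[OF continuous_on_subset[OF Hm_cont]]) (auto intro: continuous_on_subset[OF f])
  then have "uniformly_continuous_on cube (f \<circ> Hm)"
    using compact_cube compact_uniformly_continuous by blast
  then obtain d where d: "d > 0" and dd: "\<And>x x'. x \<in> cube \<Longrightarrow> x' \<in> cube \<Longrightarrow> dist x' x < d \<Longrightarrow>
      dist ((f \<circ> Hm) x') ((f \<circ> Hm) x) < \<epsilon>"
    unfolding uniformly_continuous_on_def using e by metis
  define \<delta> where "\<delta> = d / real CARD('p)"
  have "\<delta> > 0" using d by (simp add: \<delta>_def)
  moreover have "\<bar>f (\<chi> i. ereal (u$i)) - f (\<chi> i. ereal (v$i))\<bar> < \<epsilon>"
    if uv: "\<forall>i. \<bar>u$i - v$i\<bar> < \<delta>" for u v :: "real^'p"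
  proof -
    define u' where "u' = (\<chi> i. qf (u$i))"
    define v' where "v' = (\<chi> i. qf (v$i))"
    have qb: "-1 \<le> qf r \<and> qf r \<le> 1" for r using qf_bound[of r] by (simp add: abs_less_iff)
    have cu: "u' \<in> cube" "v' \<in> cube" using qb
      by (auto simp: u'_def v'_def cube_def)
    have Hu: "Hm u' = (\<chi> i. ereal (u$i))" "Hm v' = (\<chi> i. ereal (v$i))"
      by (simp_all add: Hm_def u'_def v'_def gf_qf)
    have "dist v' u' = norm (v' - u')" by (simp add: dist_norm)
    also have "\<dots> \<le> (\<Sum>i\<in>UNIV. \<bar>(v' - u')$i\<bar>)" by (rule norm_le_l1_cart)
    also have "\<dots> < (\<Sum>i\<in>(UNIV::'p set). \<delta>)"
    proof (rule sum_strict_mono)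
      fix i :: 'p
      have "\<bar>(v' - u')$i\<bar> = \<bar>qf (v$i) - qf (u$i)\<bar>" by (simp add: u'_def v'_def)
      also have "\<dots> \<le> \<bar>v$i - u$i\<bar>" by (rule qf_lip)
      also have "\<dots> < \<delta>" using uv by (simp add: abs_minus_commute)
      finally show "\<bar>(v' - u')$i\<bar> < \<delta>" .
    qed auto
    also have "\<dots> = d" by (simp add: \<delta>_def)
    finally have "dist v' u' < d" .
    from dd[OF cu(1) cu(2) this] show ?thesis using Hu by (simp add: dist_real_def abs_minus_commute)
  qed
  ultimately show ?thesis by blast
qed

lemma t_inv_inf[simp]: "t_inv \<infinity> = \<infinity>" "t_inv (-\<infinity>) = -\<infinity>"
  by (metis t_inv.simps(2) PInfty_eq_infinity) (metis t_inv.simps(3) MInfty_eq_minfinity)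

lemma t_inv_mono: "s \<le> t \<Longrightarrow> t_inv s \<le> t_inv t"
proof (cases s; cases t)
  fix x y assume st: "s \<le> t" "s = ereal x" "t = ereal y"
  then have "x \<le> y" by simp
  moreover have "ln (exp x - 1) \<le> ln (exp y - 1)" if "0 < x" "x \<le> y"
    using that by (subst ln_le_cancel_iff) (auto simp: one_less_exp_iff)
  ultimately show ?thesis using st by auto
qed auto

lemma t_inv_surj: "range t_inv = UNIV"
proof -
  have "e \<in> range t_inv" for e
  proof (cases e)
    case (real r)
    have "0 < ln (1 + exp r)" by (rule ln_gt_zero) simp
    moreover have "ln (exp (ln (1 + exp r)) - 1) = r" by (simp add: add_pos_pos)
    ultimately have "t_inv (ereal (ln (1 + exp r))) = e" using real by simp
    then show ?thesis by (metis rangeI)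
  next
    case PInf then show ?thesis by (metis rangeI t_inv_inf(1))
  next
    case MInf then show ?thesis by (metis rangeI t_inv_inf(2))
  qed
  then show ?thesis by auto
qed

lemma t_inv_cont: "continuous_on UNIV t_inv"
  by (rule continuous_onI_mono) (auto simp: t_inv_surj t_inv_mono)

lemma ereal_abs_gt: "0 \<le> \<eta> \<Longrightarrow> (ereal \<eta> < \<bar>e\<bar>) = (ereal \<eta> < e \<or> e < - ereal \<eta>)"
  by (cases e) auto

lemma ereal_abs_ge: "0 < \<eta> \<Longrightarrow> (ereal \<eta> \<le> \<bar>e\<bar>) = (ereal \<eta> \<le> e \<or> e \<le> - ereal \<eta>)"
  by (cases e) auto

lemma sep0:
  fixes K :: "(ereal^'p) set"
  assumes K: "compact K" "0 \<notin> K"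
  shows "\<exists>\<eta>>0. \<forall>x\<in>K. \<exists>i. ereal \<eta> < \<bar>x$i\<bar>"
proof -
  define Ob where "Ob = (\<lambda>(\<eta>::real, i::'p). {x::ereal^'p. ereal \<eta> < \<bar>x$i\<bar>})"
  define C where "C = {p::real\<times>'p. 0 < fst p}"
  have opn: "open (Ob c)" if "c \<in> C" for c
  proof -
    obtain \<eta> i where c: "c = (\<eta>, i)" by force
    then have "\<eta> > 0" using that by (simp add: C_def)
    then have "Ob c = (\<lambda>x. x$i) -` ({ereal \<eta><..} \<union> {..< - ereal \<eta>})"
      by (auto simp: Ob_def c ereal_abs_gt)
    then show ?thesis by (simp add: open_vimage_vec_nth open_Un)
  qed
  have cov: "K \<subseteq> (\<Union>c\<in>C. Ob c)"
  proof
    fix x assume "x \<in> K"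
    then have "x \<noteq> 0" using K by auto
    then obtain i where xi: "x$i \<noteq> 0" by (auto simp: vec_eq_iff)
    define \<eta> where "\<eta> = (if \<bar>x$i\<bar> = \<infinity> then 1 else \<bar>real_of_ereal (x$i)\<bar> / 2)"
    have "\<eta> > 0" using xi by (cases "x$i") (auto simp: \<eta>_def)
    moreover have "ereal \<eta> < \<bar>x$i\<bar>" using xi by (cases "x$i") (auto simp: \<eta>_def)
    ultimately show "x \<in> (\<Union>c\<in>C. Ob c)" by (auto simp: C_def Ob_def intro!: bexI[of _ "(\<eta>, i)"])
  qed
  obtain C' where C': "C' \<subseteq> C" "finite C'" "K \<subseteq> (\<Union>c\<in>C'. Ob c)"
    using compactE_image[OF K(1) opn cov] by metis
  define \<eta>0 where "\<eta>0 = Min (insert 1 (fst ` C'))"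
  have "\<eta>0 > 0" using C' by (auto simp: \<eta>0_def C_def)
  moreover have "\<exists>i. ereal \<eta>0 < \<bar>x$i\<bar>" if xK: "x \<in> K" for x
  proof -
    obtain c where c: "c \<in> C'" "x \<in> Ob c" using C' xK by blast
    obtain \<eta> i where ci: "c = (\<eta>, i)" by force
    have "\<eta> \<in> insert 1 (fst ` C')" using c ci by force
    then have "\<eta>0 \<le> \<eta>" unfolding \<eta>0_def using C' by (intro Min_le) auto
    moreover have "ereal \<eta> < \<bar>x$i\<bar>" using c ci by (simp add: Ob_def)
    ultimately have "ereal \<eta>0 < \<bar>x$i\<bar>" by (meson ereal_less_eq(3) order.strict_trans1)
    then show ?thesis by blast
  qed
  ultimately show ?thesis by blast
qed

definition psi :: "real \<Rightarrow> ereal \<Rightarrow> real" where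
  "psi a e = (real_of_ereal (min (ereal (2*a)) (max (ereal a) e)) - a) / a"

lemma psi_props:
  assumes a: "0 < a"
  shows "0 \<le> psi a e" "psi a e \<le> 1" "ereal (2*a) \<le> e \<Longrightarrow> psi a e = 1"
    "psi a e \<noteq> 0 \<Longrightarrow> ereal a \<le> e"
proof -
  have cl: "min (ereal (2*a)) (max (ereal a) e) = ereal (min (2*a) (max a (if e = \<infinity> then 2*a else if e = -\<infinity> then a else real_of_ereal e)))"
    using a by (cases e) (auto simp: min_def max_def)
  let ?r = "min (2*a) (max a (if e = \<infinity> then 2*a else if e = -\<infinity> then a else real_of_ereal e))"
  have r: "a \<le> ?r" "?r \<le> 2*a" using a by auto
  have ps: "psi a e = (?r - a) / a" unfolding psi_def by (subst cl) (simp only: real_of_ereal.simps)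
  show "0 \<le> psi a e" unfolding ps using r a by simp
  show "psi a e \<le> 1" unfolding ps using r a by (simp add: divide_le_eq)
  show "ereal (2*a) \<le> e \<Longrightarrow> psi a e = 1"
  proof -
    assume "ereal (2*a) \<le> e"
    then have "?r = 2*a" by (cases e) auto
    then show ?thesis unfolding ps using a by simp
  qed
  show "psi a e \<noteq> 0 \<Longrightarrow> ereal a \<le> e"
  proof (rule ccontr)
    assume "psi a e \<noteq> 0" "\<not> ereal a \<le> e"
    then have "?r = a" using a by (cases e) auto
    then show False using \<open>psi a e \<noteq> 0\<close> unfolding ps by simp
  qed
qed

lemma psi_cont: assumes a: "0 < a" shows "continuous_on UNIV (psi a)"
proof -
  let ?cl = "\<lambda>e::ereal. min (ereal (2*a)) (max (ereal a) e)"
  have c1: "continuous_on UNIV ?cl"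
    by (intro continuous_on_min continuous_on_max continuous_on_const continuous_on_id)
  have c2: "continuous_on (range ?cl) real_of_ereal"
  proof (rule continuous_at_imp_continuous_on, rule ballI)
    fix y assume "y \<in> range ?cl"
    then have "\<bar>y\<bar> \<noteq> \<infinity>" using a by (auto simp: min_def max_def)
    then show "isCont real_of_ereal y" by (rule continuous_at_of_ereal)
  qed
  have "continuous_on UNIV (\<lambda>e. real_of_ereal (?cl e))"
    by (rule continuous_on_compose2[OF c2 c1]) auto
  then show ?thesis unfolding psi_def[abs_def]
    using a by (intro continuous_intros) auto
qed



lemma d_bound:
  fixes x :: real assumes x: "0 < x"
  shows "0 \<le> x - ln (exp x - 1)" "x - ln (exp x - 1) \<le> 1 + max 0 (- ln x)"
proof -
  have e1: "0 < exp x - 1" using x by (simp add: one_less_exp_iff)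
  have "ln (exp x - 1) \<le> ln (exp x)" using e1 by (subst ln_le_cancel_iff) auto
  then show "0 \<le> x - ln (exp x - 1)" by simp
  show "x - ln (exp x - 1) \<le> 1 + max 0 (- ln x)"
  proof (cases "x \<ge> 1")
    case True
    have "exp (x - 1) \<le> exp x - 1"
    proof -
      have "exp x = exp (x - 1) * exp 1" by (simp add: exp_add[symmetric])
      moreover have "exp 1 \<ge> (2::real)" using exp_ge_add_one_self[of 1] by simp
      moreover have e: "1 \<le> exp (x - 1)" using True by simp
      ultimately have "exp x \<ge> exp (x - 1) * 2" by (metis mult_left_mono exp_ge_zero)
      then show ?thesis using e by linarith
    qed
    then have "x - 1 \<le> ln (exp x - 1)" using e1 by (metis exp_gt_zero ln_exp ln_le_cancel_iff)
    then show ?thesis by simp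
  next
    case False
    have "x \<le> exp x - 1" using exp_ge_add_one_self[of x] by linarith
    then have "ln x \<le> ln (exp x - 1)" using x by (subst ln_le_cancel_iff) auto
    then show ?thesis using False by simp
  qed
qed

lemma closed_zero: "closed {0::ereal^'p}"
proof -
  have eq: "{0::ereal^'p} = {x. \<forall>i. x$i \<in> {0}}" by (auto simp: vec_eq_iff)
  show ?thesis by (subst eq, rule closed_vector_box) simp
qed

lemma nn_scaled:
  fixes T :: "'a \<Rightarrow> ereal^'p" and h :: "ereal^'p \<Rightarrow> real"
  assumes M: "prob_space M" and T: "T \<in> M \<rightarrow>\<^sub>M borel" and h: "h \<in> borel_measurable borel"
    and h0: "\<And>x. 0 \<le> h x" and hB: "\<And>x. h x \<le> B" and hz: "h 0 = 0"
    and S: "S \<in> sets borel" and TS: "\<And>\<omega>. \<omega> \<in> space M \<Longrightarrow> T \<omega> \<in> S"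
  shows "(\<integral>\<^sup>+x\<in>S - {0}. ennreal (h x) \<partial>scale_measure (of_nat n) (distr M borel T))
       = ennreal (real n * (\<integral>\<omega>. h (T \<omega>) \<partial>M))"
proof -
  interpret prob_space M by (rule M)
  have hm: "(\<lambda>x. ennreal (h x) * indicator (S - {0}) x) \<in> borel_measurable borel"
    using h S borel_closed[OF closed_zero] by measurable
  have "(\<integral>\<^sup>+x\<in>S - {0}. ennreal (h x) \<partial>scale_measure (of_nat n) (distr M borel T))
      = of_nat n * (\<integral>\<^sup>+x. ennreal (h x) * indicator (S - {0}) x \<partial>distr M borel T)"
    by (rule nn_integral_scale_measure) (use hm in simp)
  also have "(\<integral>\<^sup>+x. ennreal (h x) * indicator (S - {0}) x \<partial>distr M borel T)
      = (\<integral>\<^sup>+\<omega>. ennreal (h (T \<omega>)) * indicator (S - {0}) (T \<omega>) \<partial>M)"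
    by (rule nn_integral_distr[OF T]) (use hm in simp)
  also have "\<dots> = (\<integral>\<^sup>+\<omega>. ennreal (h (T \<omega>)) \<partial>M)"
    by (rule nn_integral_cong) (use TS hz in \<open>auto simp: indicator_def\<close>)
  also have "\<dots> = ennreal (\<integral>\<omega>. h (T \<omega>) \<partial>M)"
  proof (rule nn_integral_eq_integral)
    show "integrable M (\<lambda>\<omega>. h (T \<omega>))"
      by (rule integrable_const_bound[where B=B]) (use h0 hB T h in auto)
  qed (use h0 in auto)
  finally show ?thesis
    using h0 by (simp add: ennreal_of_nat_eq_real_of_nat ennreal_mult integral_nonneg)
qed

lemma closed_Splus: "closed Splus"
proof -
  have eq: "Splus = {x. \<forall>i. x$i \<in> {0..}}" by (auto simp: Splus_def)
  show ?thesis by (subst eq, rule closed_vector_box) simp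
qed

lemma sc_cont: "continuous_on UNIV (\<lambda>x::ereal^'p. \<chi> i. ereal c * x$i)"
  by (rule cont_vec_lambda, rule continuous_on_cmult_ereal) (auto intro: cont_nth)

lemma tv_cont: "continuous_on UNIV (\<lambda>x::ereal^'p. \<chi> i. t_inv (x$i))"
  by (rule cont_vec_lambda, rule continuous_on_compose2[OF t_inv_cont cont_nth]) auto

lemma X_limit:
  fixes Xe :: "'a \<Rightarrow> ereal^'p" and h :: "ereal^'p \<Rightarrow> real"
  assumes M: "prob_space M" and Xm: "Xe \<in> M \<rightarrow>\<^sub>M borel"
    and XS: "\<And>\<omega>. \<omega> \<in> space M \<Longrightarrow> Xe \<omega> \<in> Splus"
    and vc: "vague_conv Splus (scaled_law M Xe b) \<nu>"
    and rad: "radon_on Splus \<nu>"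
    and bt: "filterlim b at_top sequentially"
    and hc: "continuous_on UNIV h" and h0: "\<And>x. 0 \<le> h x" and hB: "\<And>x. h x \<le> B"
    and C: "closed C" "0 \<notin> C" and hC: "\<And>x. h x \<noteq> 0 \<Longrightarrow> x \<in> C"
  shows "\<exists>l\<ge>0. (\<lambda>n. real n * (\<integral>\<omega>. h (\<chi> i. ereal (inverse (b n)) * Xe \<omega> $ i) \<partial>M)) \<longlonglongrightarrow> l
           \<and> (\<integral>\<^sup>+x\<in>Splus - {0}. ennreal (h x) \<partial>\<nu>) = ennreal l"
proof -
  let ?L = "\<integral>\<^sup>+x\<in>Splus - {0}. ennreal (h x) \<partial>\<nu>"
  define K' where "K' = Splus \<inter> C"
  have K'c: "compact K'" unfolding K'_def
    using compact_Int_closed[OF compact_UNIV_vec, of "Splus \<inter> C"] closed_Splus C by auto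
  have K'0: "K' \<subseteq> Splus - {0}" using C by (auto simp: K'_def)
  have lim: "(\<lambda>n. \<integral>\<^sup>+x\<in>Splus - {0}. ennreal (h x) \<partial>scaled_law M Xe b n) \<longlonglongrightarrow> ?L"
    using vc unfolding vague_conv_def
    apply (elim allE[of _ h])
    apply (erule mp)
    using hc h0 K'c K'0 hC by (auto intro!: exI[of _ K'] continuous_on_subset[OF hc] simp: K'_def)
  have hm: "h \<in> borel_measurable borel" by (rule borel_measurable_continuous_onI[OF hc])
  have sets: "sets \<nu> = sets borel" using rad by (simp add: radon_on_def)
  have K'm: "K' \<in> sets \<nu>" unfolding sets K'_def using closed_Splus C by (intro borel_closed closed_Int)
  have "?L \<le> (\<integral>\<^sup>+x. ennreal B * indicator K' x \<partial>\<nu>)"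
  proof (rule nn_integral_mono)
    fix x
    show "ennreal (h x) * indicator (Splus - {0}) x \<le> ennreal B * indicator K' x"
    proof (cases "h x = 0")
      case False
      then have "x \<in> C" using hC by blast
      then show ?thesis using hB[of x] by (auto simp: indicator_def K'_def intro: ennreal_leI)
    qed simp
  qed
  also have "\<dots> = ennreal B * emeasure \<nu> K'" using K'm by (simp add: nn_integral_cmult_indicator)
  also have "\<dots> < \<infinity>" using rad K'c K'0 unfolding radon_on_def
    by (simp add: ennreal_mult_less_top)
  finally have Lfin: "?L < \<infinity>" .
  define l where "l = enn2real ?L"
  have Ll: "?L = ennreal l" using Lfin by (simp add: l_def)
  have l0: "l \<ge> 0" by (simp add: l_def)
  have ev: "eventually (\<lambda>n. (\<integral>\<^sup>+x\<in>Splus - {0}. ennreal (h x) \<partial>scaled_law M Xe b n)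
      = ennreal (real n * (\<integral>\<omega>. h (\<chi> i. ereal (inverse (b n)) * Xe \<omega> $ i) \<partial>M))) sequentially"
  proof -
    have "eventually (\<lambda>n. b n > 0) sequentially" using bt by (simp add: filterlim_at_top_dense)
    then show ?thesis
    proof (rule eventually_mono)
      fix n assume bn: "0 < b n"
      have h00: "h 0 = 0" using hC C by force
      have Tm: "(\<lambda>\<omega>. \<chi> i. ereal (inverse (b n)) * Xe \<omega> $ i) \<in> M \<rightarrow>\<^sub>M borel"
        using measurable_compose[OF Xm borel_measurable_continuous_onI[OF sc_cont]] by simp
      show "(\<integral>\<^sup>+x\<in>Splus - {0}. ennreal (h x) \<partial>scaled_law M Xe b n)
         = ennreal (real n * (\<integral>\<omega>. h (\<chi> i. ereal (inverse (b n)) * Xe \<omega> $ i) \<partial>M))"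
        unfolding scaled_law_def
      proof (rule nn_scaled[OF M Tm hm h0 hB h00])
        show "Splus \<in> sets borel" using closed_Splus by (rule borel_closed)
        fix \<omega> assume "\<omega> \<in> space M"
        then show "(\<chi> i. ereal (inverse (b n)) * Xe \<omega> $ i) \<in> Splus"
          using XS bn by (auto simp: Splus_def)
      qed
    qed
  qed
  have "(\<lambda>n. ennreal (real n * (\<integral>\<omega>. h (\<chi> i. ereal (inverse (b n)) * Xe \<omega> $ i) \<partial>M))) \<longlonglongrightarrow> ennreal l"
    using Lim_transform_eventually[OF lim ev] Ll by simp
  then have "(\<lambda>n. real n * (\<integral>\<omega>. h (\<chi> i. ereal (inverse (b n)) * Xe \<omega> $ i) \<partial>M)) \<longlonglongrightarrow> l"
    by (subst (asm) tendsto_ennreal_iff) (use l0 h0 in \<open>auto intro!: always_eventually integral_nonneg\<close>)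
  then show ?thesis using l0 Ll by blast
qed



lemma vague_part:
  fixes X :: "'a \<Rightarrow> real^'p" and \<nu>X :: "(ereal^'p) measure"
  assumes M: "prob_space M" and Xm: "X \<in> borel_measurable M"
    and Xnn: "\<And>\<omega> i. \<omega> \<in> space M \<Longrightarrow> 0 \<le> X \<omega> $ i"
    and Xem: "(\<lambda>\<omega>. \<chi> i. ereal (X \<omega> $ i)) \<in> borel_measurable M"
    and vc: "vague_conv Splus (scaled_law M (\<lambda>\<omega>. \<chi> i. ereal (X \<omega> $ i)) b) \<nu>X"
    and rad: "radon_on Splus \<nu>X" and bt: "filterlim b at_top sequentially"
    and small: "\<And>k i. k > 0 \<Longrightarrow>
       (\<lambda>n. real n * measure M {\<omega> \<in> space M. X \<omega> $ i \<le> exp (- k * b n)}) \<longlonglongrightarrow> 0"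
  shows "vague_conv UNIV (scaled_law M (\<lambda>\<omega>. \<chi> i. t_inv (ereal (X \<omega> $ i))) b)
           (density \<nu>X (indicator Splus))"
  unfolding vague_conv_def
proof (intro allI impI)
  interpret prob_space M by (rule M)
  fix f :: "ereal^'p \<Rightarrow> real"
  assume "continuous_on UNIV f \<and> (\<forall>x\<in>UNIV. 0 \<le> f x) \<and>
       (\<exists>K. compact K \<and> K \<subseteq> UNIV - {0} \<and> (\<forall>x\<in>UNIV - K. f x = 0))"
  then obtain K where fc: "continuous_on UNIV f" and f0: "\<And>x. 0 \<le> f x" and Kc: "compact K"
    and K0: "K \<subseteq> UNIV - {0}" and fK: "\<And>x. x \<notin> K \<Longrightarrow> f x = 0" by auto
  obtain \<eta> where \<eta>: "\<eta> > 0" "\<And>x. x \<in> K \<Longrightarrow> \<exists>i. ereal \<eta> < \<bar>x$i\<bar>"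
  proof -
    have "0 \<notin> K" using K0 by auto
    from sep0[OF Kc this] show ?thesis using that by blast
  qed
  define K\<eta> where "K\<eta> = {x::ereal^'p. \<exists>i. ereal \<eta> \<le> \<bar>x$i\<bar>}"
  have "K\<eta> = (\<Union>i. (\<lambda>x. x$i) -` ({ereal \<eta>..} \<union> {..- ereal \<eta>}))"
    using \<eta>(1) by (auto simp: K\<eta>_def ereal_abs_ge)
  then have K\<eta>c: "closed K\<eta>"
    by (simp add: closed_UN closed_vimage_vec_nth closed_Un)
  have K\<eta>0: "0 \<notin> K\<eta>" using \<eta>(1) by (auto simp: K\<eta>_def)
  have fK\<eta>: "x \<in> K\<eta>" if "f x \<noteq> 0" for x
    using fK[of x] that \<eta>(2)[of x] by (force simp: K\<eta>_def intro: less_imp_le)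
  obtain B where fB: "\<And>x. f x \<le> B"
  proof -
    have "compact (f ` UNIV)" by (rule compact_continuous_image[OF fc compact_UNIV_vec])
    then have "bounded (f ` UNIV)" by (rule compact_imp_bounded)
    then obtain a where "\<forall>y\<in>f ` UNIV. norm y \<le> a" unfolding bounded_iff by blast
    then have "f x \<le> a" for x by (metis abs_le_D1 real_norm_def rangeI)
    then show ?thesis using that by blast
  qed
  have B0: "0 \<le> B" using f0[of 0] fB[of 0] by linarith
  define \<phi> where "\<phi> = (\<lambda>x::ereal^'p. \<Sum>i\<in>UNIV. psi (\<eta>/4) (x$i))"
  have \<eta>4: "0 < \<eta>/4" using \<eta>(1) by simp
  have \<phi>c: "continuous_on UNIV \<phi>" unfolding \<phi>_def
    by (intro continuous_on_sum continuous_on_compose2[OF psi_cont[OF \<eta>4] cont_nth]) auto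
  have \<phi>0: "0 \<le> \<phi> x" for x unfolding \<phi>_def using psi_props(1)[OF \<eta>4] by (simp add: sum_nonneg)
  have \<phi>B: "\<phi> x \<le> real CARD('p)" for x
  proof -
    have "\<phi> x \<le> (\<Sum>i\<in>(UNIV::'p set). 1)" unfolding \<phi>_def
      by (rule sum_mono) (rule psi_props(2)[OF \<eta>4])
    then show ?thesis by simp
  qed
  define Ka where "Ka = {x::ereal^'p. \<exists>i. ereal (\<eta>/4) \<le> x$i}"
  have "Ka = (\<Union>i. (\<lambda>x. x$i) -` {ereal (\<eta>/4)..})" by (auto simp: Ka_def)
  then have Kac: "closed Ka" by (simp add: closed_UN closed_vimage_vec_nth)
  have Ka0: "0 \<notin> Ka" using \<eta>(1) by (auto simp: Ka_def)
  have \<phi>Ka: "x \<in> Ka" if "\<phi> x \<noteq> 0" for x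
  proof -
    have "\<exists>i. psi (\<eta>/4) (x$i) \<noteq> 0" using that unfolding \<phi>_def by (rule contrapos_np) simp
    then obtain i where "psi (\<eta>/4) (x$i) \<noteq> 0" by blast
    then show ?thesis using psi_props(4)[OF \<eta>4] by (auto simp: Ka_def)
  qed
  have \<phi>1: "1 \<le> \<phi> (\<chi> i. ereal (u$i))" if "\<eta>/2 \<le> u$j" for u :: "real^'p" and j
  proof -
    have "psi (\<eta>/4) (ereal (u$j)) = 1" using that by (intro psi_props(3)[OF \<eta>4]) simp
    moreover have "psi (\<eta>/4) (ereal (u$j)) \<le> (\<Sum>i\<in>UNIV. psi (\<eta>/4) (ereal (u$i)))"
      by (rule member_le_sum[of j UNIV "\<lambda>i. psi (\<eta>/4) (ereal (u$i))"]) (auto intro: psi_props(1)[OF \<eta>4])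
    moreover have "\<phi> (\<chi> i. ereal (u$i)) = (\<Sum>i\<in>UNIV. psi (\<eta>/4) (ereal (u$i)))" by (simp add: \<phi>_def)
    ultimately show ?thesis by simp
  qed

  let ?Xe = "\<lambda>\<omega>. \<chi> i. ereal (X \<omega> $ i)"
  let ?Y = "\<lambda>\<omega>. \<chi> i. t_inv (ereal (X \<omega> $ i))"
  have XS: "?Xe \<omega> \<in> Splus" if "\<omega> \<in> space M" for \<omega> using Xnn[OF that] by (simp add: Splus_def)
  obtain lf where lf0: "lf \<ge> 0"
    and lfa: "(\<lambda>n. real n * (\<integral>\<omega>. f (\<chi> i. ereal (inverse (b n)) * ?Xe \<omega> $ i) \<partial>M)) \<longlonglongrightarrow> lf"
    and lfL: "(\<integral>\<^sup>+x\<in>Splus - {0}. ennreal (f x) \<partial>\<nu>X) = ennreal lf"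
    using X_limit[OF M Xem XS vc rad bt fc f0 fB K\<eta>c K\<eta>0 fK\<eta>] by blast
  obtain l\<phi> where l\<phi>0: "l\<phi> \<ge> 0"
    and l\<phi>a: "(\<lambda>n. real n * (\<integral>\<omega>. \<phi> (\<chi> i. ereal (inverse (b n)) * ?Xe \<omega> $ i) \<partial>M)) \<longlonglongrightarrow> l\<phi>"
    using X_limit[OF M Xem XS vc rad bt \<phi>c \<phi>0 \<phi>B Kac Ka0 \<phi>Ka] by blast
  define xs where "xs = (\<lambda>n \<omega>. \<chi> i. ereal (inverse (b n) * X \<omega> $ i))"
  define ys where "ys = (\<lambda>n \<omega>. \<chi> i. ereal (inverse (b n)) * t_inv (ereal (X \<omega> $ i)))"
  have xs_eq: "(\<chi> i. ereal (inverse (b n)) * ?Xe \<omega> $ i) = xs n \<omega>" for n \<omega> by (simp add: xs_def)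
  define a where "a = (\<lambda>n. real n * (\<integral>\<omega>. f (xs n \<omega>) \<partial>M))"
  define c where "c = (\<lambda>n. real n * (\<integral>\<omega>. \<phi> (xs n \<omega>) \<partial>M))"
  define y where "y = (\<lambda>n. real n * (\<integral>\<omega>. f (ys n \<omega>) \<partial>M))"
  have a_lim: "a \<longlonglongrightarrow> lf" using lfa unfolding a_def xs_eq .
  have c_lim: "c \<longlonglongrightarrow> l\<phi>" using l\<phi>a unfolding c_def xs_eq .
  have fm: "f \<in> borel_measurable borel" by (rule borel_measurable_continuous_onI[OF fc])
  have \<phi>m: "\<phi> \<in> borel_measurable borel" by (rule borel_measurable_continuous_onI[OF \<phi>c])
  have Ym: "?Y \<in> borel_measurable M"
    using measurable_compose[OF Xem borel_measurable_continuous_onI[OF tv_cont]] by simp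
  have xsm: "xs n \<in> borel_measurable M" for n
    using measurable_compose[OF Xem borel_measurable_continuous_onI[OF sc_cont[of "inverse (b n)"]]]
    by (simp add: xs_def)
  have ysm: "ys n \<in> borel_measurable M" for n
    using measurable_compose[OF Ym borel_measurable_continuous_onI[OF sc_cont[of "inverse (b n)"]]]
    by (simp add: ys_def)
  have f00: "f 0 = 0" using fK\<eta> K\<eta>0 by blast
  have lhs: "(\<integral>\<^sup>+x\<in>UNIV - {0}. ennreal (f x) \<partial>scaled_law M ?Y b n) = ennreal (y n)" for n
    unfolding scaled_law_def y_def
  proof -
    have Tm: "(\<lambda>\<omega>. \<chi> i. ereal (inverse (b n)) * ?Y \<omega> $ i) \<in> M \<rightarrow>\<^sub>M borel"
      using ysm[of n] by (simp add: ys_def)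
    have "(\<integral>\<^sup>+x\<in>UNIV - {0}. ennreal (f x) \<partial>scale_measure (of_nat n) (distr M borel (\<lambda>\<omega>. \<chi> i. ereal (inverse (b n)) * ?Y \<omega> $ i)))
       = ennreal (real n * (\<integral>\<omega>. f (\<chi> i. ereal (inverse (b n)) * ?Y \<omega> $ i) \<partial>M))"
      by (rule nn_scaled[OF M Tm fm f0 fB f00]) auto
    then show "(\<integral>\<^sup>+x\<in>UNIV - {0}. ennreal (f x) \<partial>scale_measure (of_nat n) (distr M borel (\<lambda>\<omega>. \<chi> i. ereal (inverse (b n)) * ?Y \<omega> $ i)))
       = ennreal (real n * (\<integral>\<omega>. f (ys n \<omega>) \<partial>M))" by (simp add: ys_def)
  qed
  have sets\<nu>: "sets \<nu>X = sets borel" using rad by (simp add: radon_on_def)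
  have Sm: "Splus \<in> sets borel" by (rule borel_closed[OF closed_Splus])
  have rhs: "(\<integral>\<^sup>+x\<in>UNIV - {0}. ennreal (f x) \<partial>density \<nu>X (indicator Splus)) = ennreal lf"
  proof -
    have im: "(indicator Splus :: ereal^'p \<Rightarrow> ennreal) \<in> borel_measurable \<nu>X"
      by (subst measurable_cong_sets[OF sets\<nu> refl]) (rule borel_measurable_indicator[OF Sm])
    have gm: "(\<lambda>x. ennreal (f x) * indicator (UNIV - {0}) x) \<in> borel_measurable \<nu>X"
    proof -
      have "UNIV - {0::ereal^'p} \<in> sets borel"
        using borel_closed[OF closed_zero] by (metis sets.top space_borel sets.Diff)
      then show ?thesis
        using fm by (subst measurable_cong_sets[OF sets\<nu> refl]) (intro borel_measurable_times_ennreal borel_measurable_indicator measurable_compose[OF fm measurable_ennreal])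
    qed
    have "(\<integral>\<^sup>+x\<in>UNIV - {0}. ennreal (f x) \<partial>density \<nu>X (indicator Splus))
        = (\<integral>\<^sup>+x. indicator Splus x * (ennreal (f x) * indicator (UNIV - {0}) x) \<partial>\<nu>X)"
      by (rule nn_integral_density[OF im gm])
    also have "\<dots> = (\<integral>\<^sup>+x\<in>Splus - {0}. ennreal (f x) \<partial>\<nu>X)"
      by (rule nn_integral_cong) (auto simp: indicator_def)
    finally show ?thesis using lfL by simp
  qed
  show "(\<lambda>n. \<integral>\<^sup>+x\<in>UNIV - {0}. ennreal (f x) \<partial>scaled_law M ?Y b n)
      \<longlonglongrightarrow> (\<integral>\<^sup>+x\<in>UNIV - {0}. ennreal (f x) \<partial>density \<nu>X (indicator Splus))"
    unfolding lhs rhs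
  proof (rule tendsto_ennrealI)
    have "(\<lambda>n. y n - a n) \<longlonglongrightarrow> 0"
      unfolding tendsto_iff
    proof (intro allI impI)
      fix e :: real assume e: "0 < e"
      define \<epsilon> where "\<epsilon> = e / (2 * (l\<phi> + 1))"
      have \<epsilon>0: "0 < \<epsilon>" using e l\<phi>0 by (simp add: \<epsilon>_def)
      have \<epsilon>e: "\<epsilon> * (l\<phi> + 1) = e / 2"
      proof -
        have "l\<phi> + 1 \<noteq> 0" using l\<phi>0 by simp
        then show ?thesis unfolding \<epsilon>_def by (simp add: field_simps)
      qed
      obtain \<delta>0 where \<delta>0: "\<delta>0 > 0" and uc: "\<And>u v :: real^'p. (\<forall>i. \<bar>u$i - v$i\<bar> < \<delta>0) \<Longrightarrow>
            \<bar>f (\<chi> i. ereal (u$i)) - f (\<chi> i. ereal (v$i))\<bar> < \<epsilon>"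
        using UC[OF fc \<epsilon>0] by blast
      define \<delta> where "\<delta> = min \<delta>0 (\<eta>/2)"
      have \<delta>: "0 < \<delta>" "\<delta> \<le> \<delta>0" "\<delta> \<le> \<eta>/2" using \<delta>0 \<eta>(1) by (auto simp: \<delta>_def)
      define \<kappa> where "\<kappa> = \<delta>/2"
      have \<kappa>: "0 < \<kappa>" using \<delta> by (simp add: \<kappa>_def)
      define A where "A = (\<lambda>n i. {\<omega> \<in> space M. X \<omega> $ i \<le> exp (- \<kappa> * b n)})"
      have Xi: "(\<lambda>\<omega>. X \<omega> $ i) \<in> borel_measurable M" for i
        using measurable_compose[OF Xm borel_measurable_continuous_onI[OF cont_nth]] by simp
      have Am: "A n i \<in> sets M" for n i
        unfolding A_def using Xi[of i] by measurable
      have E1: "eventually (\<lambda>n. 2/\<delta> < b n) sequentially"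
        using bt by (simp add: filterlim_at_top_dense)
      have E2: "eventually (\<lambda>n. c n < l\<phi> + 1) sequentially"
        using c_lim by (rule order_tendstoD) simp
      have "(\<lambda>n. B * (\<Sum>i\<in>UNIV. real n * measure M (A n i))) \<longlonglongrightarrow> B * (\<Sum>i\<in>(UNIV::'p set). 0)"
        unfolding A_def by (intro tendsto_mult tendsto_const tendsto_sum small \<kappa>)
      then have E3: "eventually (\<lambda>n. B * (\<Sum>i\<in>UNIV. real n * measure M (A n i)) < e/2) sequentially"
        using e by (intro order_tendstoD) auto
      show "eventually (\<lambda>n. dist (y n - a n) 0 < e) sequentially"
        using E1 E2 E3
      proof eventually_elim
        case (elim n)
        have bn: "0 < b n" using elim(1) \<delta> by (smt (verit) divide_pos_pos)
        have ib: "inverse (b n) < \<delta>/2"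
          using elim(1) \<delta> bn by (simp add: field_simps)
        define D where "D = (\<lambda>\<omega>. \<epsilon> * \<phi> (xs n \<omega>) + B * (\<Sum>i\<in>UNIV. indicator (A n i) \<omega>))"
        have pw: "\<bar>f (ys n \<omega>) - f (xs n \<omega>)\<bar> \<le> D \<omega>" if \<omega>: "\<omega> \<in> space M" for \<omega>
        proof -
          have Dge: "B * (\<Sum>i\<in>UNIV. indicator (A n i) \<omega>) \<le> D \<omega>"
            unfolding D_def using \<epsilon>0 \<phi>0 by simp
          have Dge2: "\<epsilon> * \<phi> (xs n \<omega>) \<le> D \<omega>"
            unfolding D_def using B0 by (simp add: sum_nonneg)
          have dB: "\<bar>f (ys n \<omega>) - f (xs n \<omega>)\<bar> \<le> B"
            using f0 fB by (simp add: abs_le_iff) (smt (verit) f0 fB)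
          show ?thesis
          proof (cases "\<exists>i. X \<omega> $ i \<le> exp (- \<kappa> * b n)")
            case True
            then obtain j where j: "X \<omega> $ j \<le> exp (- \<kappa> * b n)" by blast
            have "1 \<le> (\<Sum>i\<in>UNIV. indicator (A n i) \<omega> :: real)"
            proof -
              have "indicator (A n j) \<omega> \<le> (\<Sum>i\<in>UNIV. indicator (A n i) \<omega> :: real)"
                by (rule member_le_sum) auto
              moreover have "indicator (A n j) \<omega> = (1::real)" using j \<omega> by (simp add: A_def)
              ultimately show ?thesis by simp
            qed
            then have "B \<le> B * (\<Sum>i\<in>UNIV. indicator (A n i) \<omega>)" using B0
              by (metis mult.right_neutral mult_left_mono)
            then show ?thesis using dB Dge by linarith
          next
            case False
            then have Xg: "exp (- \<kappa> * b n) < X \<omega> $ i" for i by (simp add: not_le)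
            then have Xp: "0 < X \<omega> $ i" for i by (rule order.strict_trans[OF exp_gt_zero])
            define u where "u = (\<chi> i. inverse (b n) * X \<omega> $ i)"
            define v where "v = (\<chi> i. inverse (b n) * ln (exp (X \<omega> $ i) - 1))"
            have xu: "xs n \<omega> = (\<chi> i. ereal (u$i))" by (simp add: xs_def u_def)
            have yv: "ys n \<omega> = (\<chi> i. ereal (v$i))"
              using Xp by (simp add: ys_def v_def vec_eq_iff not_le)
            have uv: "\<bar>u$i - v$i\<bar> < \<delta>" for i
            proof -
              let ?x = "X \<omega> $ i"
              have d1: "0 \<le> ?x - ln (exp ?x - 1)" "?x - ln (exp ?x - 1) \<le> 1 + max 0 (- ln ?x)"
                using d_bound[OF Xp[of i]] by auto
              have "- \<kappa> * b n < ln ?x" using Xg[of i] Xp[of i] by (metis ln_exp ln_less_cancel_iff exp_gt_zero)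
              then have "max 0 (- ln ?x) < \<kappa> * b n" using \<kappa> bn by (simp add: max_def)
              then have d2: "?x - ln (exp ?x - 1) < 1 + \<kappa> * b n" using d1 by linarith
              have "u$i - v$i = inverse (b n) * (?x - ln (exp ?x - 1))"
                by (simp add: u_def v_def algebra_simps)
              then have "\<bar>u$i - v$i\<bar> = inverse (b n) * (?x - ln (exp ?x - 1))"
                using d1 bn by simp
              also have "\<dots> < inverse (b n) * (1 + \<kappa> * b n)"
                using d2 bn by (intro mult_strict_left_mono) auto
              also have "\<dots> = inverse (b n) + \<kappa>" using bn by (simp add: field_simps)
              also have "\<dots> < \<delta>" using ib by (simp add: \<kappa>_def)
              finally show ?thesis .
            qed
            have u0: "0 \<le> u$i" for i using Xp[of i] bn by (simp add: u_def)
            have fd: "\<bar>f (ys n \<omega>) - f (xs n \<omega>)\<bar> < \<epsilon>"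
            proof -
              have "\<forall>i. \<bar>v$i - u$i\<bar> < \<delta>0"
              proof
                fix i show "\<bar>v$i - u$i\<bar> < \<delta>0" using uv[of i] \<delta>(2) by (simp add: abs_minus_commute)
              qed
              from uc[OF this] show ?thesis unfolding xu yv .
            qed
            show ?thesis
            proof (cases "f (ys n \<omega>) = 0 \<and> f (xs n \<omega>) = 0")
              case True
              then show ?thesis using Dge B0 by (smt (verit) mult_nonneg_nonneg sum_nonneg indicator_pos_le Dge)
            next
              case False
              have "\<exists>j. \<eta>/2 \<le> u$j"
              proof (cases "f (xs n \<omega>) = 0")
                case False
                then have "xs n \<omega> \<in> K\<eta>" by (rule fK\<eta>)
                then obtain j where "ereal \<eta> \<le> \<bar>ereal (u$j)\<bar>" unfolding xu K\<eta>_def by auto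
                then have "\<eta> \<le> u$j" using u0[of j] by simp
                then show ?thesis using \<eta>(1) by (intro exI[of _ j]) simp
              next
                case True
                then have "f (ys n \<omega>) \<noteq> 0" using \<open>\<not> (f (ys n \<omega>) = 0 \<and> f (xs n \<omega>) = 0)\<close> by simp
                then have "ys n \<omega> \<in> K\<eta>" by (rule fK\<eta>)
                then obtain j where "ereal \<eta> \<le> \<bar>ereal (v$j)\<bar>" unfolding yv K\<eta>_def by auto
                then have "\<eta> \<le> \<bar>v$j\<bar>" by simp
                then have "\<eta>/2 \<le> u$j" using uv[of j] \<delta>(3) u0[of j] by linarith
                then show ?thesis by blast
              qed
              then obtain j where "\<eta>/2 \<le> u$j" by blast
              then have "1 \<le> \<phi> (xs n \<omega>)" unfolding xu by (rule \<phi>1)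
              then have "\<epsilon> \<le> \<epsilon> * \<phi> (xs n \<omega>)" using \<epsilon>0 by simp
              then show ?thesis using fd Dge2 by linarith
            qed
          qed
        qed
        have Bi: "integrable M g" if "g \<in> borel_measurable M" "\<And>\<omega>. \<bar>g \<omega>\<bar> \<le> C" for g :: "'a \<Rightarrow> real" and C
          by (rule integrable_const_bound[where B=C]) (use that in auto)
        have fy: "integrable M (\<lambda>\<omega>. f (ys n \<omega>))"
          by (rule Bi[of _ B]) (use measurable_compose[OF ysm fm] f0 fB in auto)
        have fx: "integrable M (\<lambda>\<omega>. f (xs n \<omega>))"
          by (rule Bi[of _ B]) (use measurable_compose[OF xsm fm] f0 fB in auto)
        have px: "integrable M (\<lambda>\<omega>. \<phi> (xs n \<omega>))"
          by (rule Bi[of _ "real CARD('p)"]) (use measurable_compose[OF xsm \<phi>m] \<phi>0 \<phi>B in auto)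
        have ii: "integrable M (indicator (A n i) :: 'a \<Rightarrow> real)" for i
          by (rule Bi[of _ 1]) (use borel_measurable_indicator[OF Am] in auto)
        have Di: "integrable M D" unfolding D_def using px ii by auto
        have "(\<integral>\<omega>. f (ys n \<omega>) - f (xs n \<omega>) \<partial>M) \<le> integral\<^sup>L M D"
          by (rule integral_mono) (use fy fx Di pw in \<open>auto simp: abs_le_iff\<close>)
        moreover have "(\<integral>\<omega>. f (xs n \<omega>) - f (ys n \<omega>) \<partial>M) \<le> integral\<^sup>L M D"
          by (rule integral_mono) (use fy fx Di pw in \<open>auto simp: abs_le_iff\<close>)
        ultimately have ab: "\<bar>(\<integral>\<omega>. f (ys n \<omega>) \<partial>M) - (\<integral>\<omega>. f (xs n \<omega>) \<partial>M)\<bar> \<le> integral\<^sup>L M D"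
          using fy fx by simp
        have iD: "integral\<^sup>L M D = \<epsilon> * (\<integral>\<omega>. \<phi> (xs n \<omega>) \<partial>M) + B * (\<Sum>i\<in>UNIV. measure M (A n i))"
        proof -
          have "integral\<^sup>L M D = \<epsilon> * (\<integral>\<omega>. \<phi> (xs n \<omega>) \<partial>M) + B * (\<Sum>i\<in>UNIV. (\<integral>\<omega>. indicator (A n i) \<omega> \<partial>M))"
            unfolding D_def using px ii by (simp add: integral_sum)
          moreover have "A n i \<inter> space M = A n i" for i by (auto simp: A_def)
          ultimately show ?thesis by simp
        qed
        have "\<bar>y n - a n\<bar> = real n * \<bar>(\<integral>\<omega>. f (ys n \<omega>) \<partial>M) - (\<integral>\<omega>. f (xs n \<omega>) \<partial>M)\<bar>"
          unfolding y_def a_def by (simp add: abs_mult right_diff_distrib[symmetric])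
        also have "\<dots> \<le> real n * integral\<^sup>L M D" using ab by (simp add: mult_left_mono)
        also have "\<dots> = \<epsilon> * c n + B * (\<Sum>i\<in>UNIV. real n * measure M (A n i))"
          unfolding iD c_def by (simp add: algebra_simps sum_distrib_left)
        also have "\<dots> < \<epsilon> * (l\<phi> + 1) + e/2"
          using elim(2,3) \<epsilon>0 by (intro add_le_less_mono) simp_all
        also have "\<dots> = e" using \<epsilon>e by simp
        finally show ?case by (simp add: dist_real_def)
      qed
    qed
    from tendsto_add[OF a_lim this] show "y \<longlonglongrightarrow> lf" by simp
  qed
qed


lemma sc_inv: "0 < c \<Longrightarrow> ereal (inverse c) * (ereal c * e) = e" "0 < c \<Longrightarrow> ereal c * (ereal (inverse c) * e) = e"
  by (cases e; simp)+

lemma sc_img: assumes c: "0 < c"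
  shows "(\<lambda>x::ereal^'p. \<chi> i. ereal c * x$i) ` A = (\<lambda>x. \<chi> i. ereal (inverse c) * x$i) -` A"
proof
  show "(\<lambda>x::ereal^'p. \<chi> i. ereal c * x$i) ` A \<subseteq> (\<lambda>x. \<chi> i. ereal (inverse c) * x$i) -` A"
    using sc_inv[OF c] by auto
  show "(\<lambda>x. \<chi> i. ereal (inverse c) * x$i) -` A \<subseteq> (\<lambda>x::ereal^'p. \<chi> i. ereal c * x$i) ` A"
  proof
    fix y :: "ereal^'p" assume "y \<in> (\<lambda>x. \<chi> i. ereal (inverse c) * x$i) -` A"
    moreover have "y = (\<lambda>x. \<chi> i. ereal c * x$i) (\<chi> i. ereal (inverse c) * y$i)"
      using sc_inv[OF c] by (simp add: vec_eq_iff)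
    ultimately show "y \<in> (\<lambda>x::ereal^'p. \<chi> i. ereal c * x$i) ` A" by blast
  qed
qed

lemma sc_Splus: assumes c: "0 < c"
  shows "Splus \<inter> (\<lambda>x::ereal^'p. \<chi> i. ereal c * x$i) ` A = (\<lambda>x::ereal^'p. \<chi> i. ereal c * x$i) ` (Splus \<inter> A)"
proof -
  have "(\<chi> i. ereal c * x$i) \<in> Splus \<longleftrightarrow> x \<in> Splus" for x :: "ereal^'p"
  proof -
    have "0 \<le> ereal c * e \<longleftrightarrow> 0 \<le> e" for e using c by (cases e) (auto simp: zero_le_mult_iff)
    then show ?thesis by (simp add: Splus_def)
  qed
  then show ?thesis by auto
qed

lemma emeasure_dens:
  fixes \<nu> :: "(ereal^'p) measure"
  assumes sets: "sets \<nu> = sets borel" and A: "A \<in> sets borel"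
  shows "emeasure (density \<nu> (indicator Splus)) A = emeasure \<nu> (Splus \<inter> A)"
proof -
  have Sm: "(Splus :: (ereal^'p) set) \<in> sets borel" by (rule borel_closed[OF closed_Splus])
  have im: "(indicator Splus :: ereal^'p \<Rightarrow> ennreal) \<in> borel_measurable \<nu>"
    by (subst measurable_cong_sets[OF sets refl]) (rule borel_measurable_indicator[OF Sm])
  have "emeasure (density \<nu> (indicator Splus)) A = (\<integral>\<^sup>+x. indicator Splus x * indicator A x \<partial>\<nu>)"
    by (rule emeasure_density[OF im]) (simp add: sets A)
  also have "\<dots> = (\<integral>\<^sup>+x. indicator (Splus \<inter> A) x \<partial>\<nu>)" by (simp add: indicator_inter_arith)
  also have "\<dots> = emeasure \<nu> (Splus \<inter> A)" by (rule nn_integral_indicator) (use Sm A in \<open>simp add: sets sets.Int\<close>)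
  finally show ?thesis .
qed

theorem lemmaA1:
  fixes M :: "'a measure" and X :: "'a \<Rightarrow> real ^ 'p" and \<alpha> :: real
    and b :: "nat \<Rightarrow> real" and \<nu>X :: "(ereal ^ 'p) measure"
  assumes "prob_space M"
    and "X \<in> borel_measurable M"
    and "RV_plus M X \<alpha> b \<nu>X"
    and "\<forall>k::real. k > 0 \<longrightarrow> (\<forall>i.
           (\<lambda>n. real n * measure M {\<omega> \<in> space M. X \<omega> $ i \<le> exp (- k * b n)}) \<longlonglongrightarrow> 0)"
  shows "RV M (\<lambda>\<omega>. \<chi> i. t_inv (ereal (X \<omega> $ i))) \<alpha> b (density \<nu>X (indicator Splus))"
proof -
  interpret prob_space M by (rule assms(1))
  have Xnn: "\<And>\<omega> i. \<omega> \<in> space M \<Longrightarrow> 0 \<le> X \<omega> $ i" using assms(3) by (simp add: RV_plus_def)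
  have reg: "regvar_on Splus M (\<lambda>\<omega>. \<chi> i. ereal (X \<omega> $ i)) \<alpha> b \<nu>X"
    using assms(3) by (simp add: RV_plus_def)
  then have \<alpha>: "\<alpha> > 0" and Xem: "(\<lambda>\<omega>. \<chi> i. ereal (X \<omega> $ i)) \<in> borel_measurable M"
    and bt: "filterlim b at_top sequentially" and rad: "radon_on Splus \<nu>X"
    and nz: "emeasure \<nu>X (Splus - {0}) \<noteq> 0" and hom: "homogeneous_on Splus \<alpha> \<nu>X"
    and vc: "vague_conv Splus (scaled_law M (\<lambda>\<omega>. \<chi> i. ereal (X \<omega> $ i)) b) \<nu>X"
    unfolding regvar_on_def by auto
  have small: "\<And>k i. k > 0 \<Longrightarrow>
       (\<lambda>n. real n * measure M {\<omega> \<in> space M. X \<omega> $ i \<le> exp (- k * b n)}) \<longlonglongrightarrow> 0"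
    using assms(4) by blast
  have sets: "sets \<nu>X = sets borel" using rad by (simp add: radon_on_def)
  let ?Y = "\<lambda>\<omega>. \<chi> i. t_inv (ereal (X \<omega> $ i))"
  let ?nu = "density \<nu>X (indicator Splus)"
  have Xi: "(\<lambda>\<omega>. X \<omega> $ i) \<in> borel_measurable M" for i
    using measurable_compose[OF assms(2) borel_measurable_continuous_onI[OF cont_nth]] by simp
  have pos: "AE \<omega> in M. 0 < X \<omega> $ i" for i
  proof -
    let ?N = "{\<omega> \<in> space M. \<not> 0 < X \<omega> $ i}"
    have Nm: "?N \<in> sets M" using Xi[of i] by measurable
    have "measure M ?N \<le> 0"
    proof (rule LIMSEQ_le_const[OF small[of 1 i, OF zero_less_one]])
      show "\<exists>N. \<forall>n\<ge>N. measure M ?N \<le> real n * measure M {\<omega> \<in> space M. X \<omega> $ i \<le> exp (- 1 * b n)}"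
      proof (intro exI allI impI)
        fix n :: nat assume "1 \<le> n"
        have "measure M ?N \<le> measure M {\<omega> \<in> space M. X \<omega> $ i \<le> exp (- 1 * b n)}"
        proof (rule finite_measure_mono)
          show "?N \<subseteq> {\<omega> \<in> space M. X \<omega> $ i \<le> exp (- 1 * b n)}"
            by (auto intro: order.trans[OF _ less_imp_le[OF exp_gt_zero]])
          show "{\<omega> \<in> space M. X \<omega> $ i \<le> exp (- 1 * b n)} \<in> sets M" using Xi[of i] by measurable
        qed
        also have "\<dots> \<le> real n * measure M {\<omega> \<in> space M. X \<omega> $ i \<le> exp (- 1 * b n)}"
          using \<open>1 \<le> n\<close> by (simp add: mult_le_cancel_right1)
        finally show "measure M ?N \<le> real n * measure M {\<omega> \<in> space M. X \<omega> $ i \<le> exp (- 1 * b n)}" .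
      qed
    qed
    then have "emeasure M ?N = 0" by (simp add: emeasure_eq_measure measure_nonneg antisym)
    then show ?thesis by (subst AE_iff_measurable[OF Nm refl])
  qed
  have ae: "AE \<omega> in M. \<forall>i. \<bar>?Y \<omega> $ i\<bar> \<noteq> \<infinity>"
  proof -
    have "AE \<omega> in M. \<forall>i. 0 < X \<omega> $ i" by (rule eventually_all_finite) (rule pos)
    then show ?thesis by eventually_elim (auto simp: not_le dest: spec)
  qed
  have Ym: "?Y \<in> borel_measurable M"
    using measurable_compose[OF Xem borel_measurable_continuous_onI[OF tv_cont]] by simp
  have radY: "radon_on UNIV ?nu"
    unfolding radon_on_def
  proof (intro conjI allI impI)
    show "sets ?nu = sets borel" by (simp add: sets)
    fix K :: "(ereal^'p) set" assume K: "compact K \<and> K \<subseteq> UNIV - {0}"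
    show "emeasure ?nu K < \<infinity>"
    proof (cases "K \<in> sets borel")
      case True
      have "compact (K \<inter> Splus)" using compact_Int_closed[OF conjunct1[OF K] closed_Splus] .
      then have "compact (Splus \<inter> K)" by (simp add: Int_commute)
      moreover have "Splus \<inter> K \<subseteq> Splus - {0}" using K by auto
      ultimately have "emeasure \<nu>X (Splus \<inter> K) < \<infinity>" using rad by (simp add: radon_on_def)
      then show ?thesis using emeasure_dens[OF sets True] by simp
    next
      case False
      then have "K \<notin> sets ?nu" by (simp add: sets)
      then show ?thesis by (simp add: emeasure_notin_sets)
    qed
  qed
  have U0: "UNIV - {0::ereal^'p} \<in> sets borel"
    using borel_closed[OF closed_zero] by (metis sets.top space_borel sets.Diff)
  have nzY: "emeasure ?nu (UNIV - {0}) \<noteq> 0"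
  proof -
    have "Splus \<inter> (UNIV - {0}) = Splus - {0::ereal^'p}" by auto
    then show ?thesis using emeasure_dens[OF sets U0] nz by simp
  qed
  have homY: "homogeneous_on UNIV \<alpha> ?nu"
    unfolding homogeneous_on_def
  proof (intro allI impI ballI)
    fix c :: real and A :: "(ereal^'p) set"
    assume c: "0 < c" and A: "A \<in> sets borel" and A0: "A \<subseteq> UNIV - {0}"
    let ?s = "\<lambda>x::ereal^'p. \<chi> i. ereal c * x$i"
    have sAm: "?s ` A \<in> sets borel"
    proof -
      have "(\<lambda>x::ereal^'p. \<chi> i. ereal (inverse c) * x$i) -` A \<inter> space borel \<in> sets borel"
        by (rule measurable_sets[OF borel_measurable_continuous_onI[OF sc_cont] A])
      then show ?thesis by (simp add: sc_img[OF c])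
    qed
    have SA: "Splus \<inter> A \<in> sets borel" using A borel_closed[OF closed_Splus] by auto
    have "emeasure ?nu (?s ` A) = emeasure \<nu>X (Splus \<inter> ?s ` A)" by (rule emeasure_dens[OF sets sAm])
    also have "\<dots> = emeasure \<nu>X (?s ` (Splus \<inter> A))" by (simp add: sc_Splus[OF c])
    also have "\<dots> = ennreal (c powr (-\<alpha>)) * emeasure \<nu>X (Splus \<inter> A)"
    proof -
      have "Splus \<inter> A \<subseteq> Splus - {0}" using A0 by auto
      from hom[unfolded homogeneous_on_def, rule_format, OF c SA this] show ?thesis .
    qed
    also have "\<dots> = ennreal (c powr (-\<alpha>)) * emeasure ?nu A" by (simp add: emeasure_dens[OF sets A])
    finally show "emeasure ?nu (?s ` A) = ennreal (c powr (-\<alpha>)) * emeasure ?nu A" .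
  qed
  have vY: "vague_conv UNIV (scaled_law M ?Y b) ?nu"
    by (rule vague_part[OF assms(1,2) Xnn Xem vc rad bt small])
  show ?thesis
    unfolding RV_def regvar_on_def
    using ae \<alpha> Ym bt radY nzY homY vY by blast
qed


end
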